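(* Let $K$ be an alphabet space and $\sigma:K\to K^+$ a primitive generalized substitution. Then for any two letters $a,b\in K$, $\mathcal L(\sigma,a)=\mathcal L(\sigma,b)=\mathcal L(\sigma)$.
   Context: An alphabet space is a compact zero-dimensional metric space $K$ with at least two points; $K^n$ is the set of words of length $n$ with the product topology, $K^+=\bigcup_{n\ge1}K^n$. A generalized substitution is a map $\sigma:K\to K^+$ with $a\mapsto|\sigma(a)|$ continuous and, for each $j$, $a\mapsto$ ($j$-th letter of $\sigma(a)$) continuous on $\{a:|\sigma(a)|\ge j\}$; it is extended to words by concatenation. $\sigma$ is primitive if for every nonempty open $V\subset K$ there is $j$ such that for all $a\in K$ and $k\ge j$ some letter of $\sigma^k(a)$ lies in $V$. $\mathcal L(\sigma,a)$ is the set of words $w\in K^+$ that are subwords of $\sigma^j(a)$ for some $j\in\mathbb N$, or are limits in $K^{|w|}$ of such words; $\mathcal L(\sigma)=\bigcup_{a\in K}\mathcal L(\sigma,a)$. *)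

theory Defs
  imports "HOL-Analysis.Analysis" "HOL-Library.Sublist"
begin

definition zero_dimensional :: "'a::metric_space set \<Rightarrow> bool" where
  "zero_dimensional K \<longleftrightarrow>
     (\<forall>x\<in>K. \<forall>U. openin (top_of_set K) U \<and> x \<in> U \<longrightarrow>
        (\<exists>C. openin (top_of_set K) C \<and> closedin (top_of_set K) C \<and> x \<in> C \<and> C \<subseteq> U))"

definition alphabet_space :: "'a::metric_space set \<Rightarrow> bool" where
  "alphabet_space K \<longleftrightarrow> compact K \<and> zero_dimensional K \<and> (\<exists>x\<in>K. \<exists>y\<in>K. x \<noteq> y)"

text \<open>Generalized substitution on K (words are lists; K^+ = nonempty lists over K).
  Letter positions are 0-indexed here.\<close>
definition gen_subst :: "'a::metric_space set \<Rightarrow> ('a \<Rightarrow> 'a list) \<Rightarrow> bool" where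
  "gen_subst K \<sigma> \<longleftrightarrow>
     (\<forall>a\<in>K. \<sigma> a \<noteq> [] \<and> set (\<sigma> a) \<subseteq> K) \<and>
     continuous_on K (\<lambda>a. length (\<sigma> a)) \<and>
     (\<forall>j. continuous_on {a\<in>K. j < length (\<sigma> a)} (\<lambda>a. \<sigma> a ! j))"

definition subst_word :: "('a \<Rightarrow> 'a list) \<Rightarrow> 'a list \<Rightarrow> 'a list" where
  "subst_word \<sigma> w = concat (map \<sigma> w)"

definition subst_iter :: "('a \<Rightarrow> 'a list) \<Rightarrow> nat \<Rightarrow> 'a \<Rightarrow> 'a list" where
  "subst_iter \<sigma> k a = (subst_word \<sigma> ^^ k) [a]"

definition primitive :: "'a::metric_space set \<Rightarrow> ('a \<Rightarrow> 'a list) \<Rightarrow> bool" where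
  "primitive K \<sigma> \<longleftrightarrow>
     (\<forall>V. openin (top_of_set K) V \<and> V \<noteq> {} \<longrightarrow>
        (\<exists>j. \<forall>a\<in>K. \<forall>k\<ge>j. \<exists>x\<in>set (subst_iter \<sigma> k a). x \<in> V))"

definition lang0 :: "('a \<Rightarrow> 'a list) \<Rightarrow> 'a \<Rightarrow> 'a list set" where
  "lang0 \<sigma> a = {w. w \<noteq> [] \<and> (\<exists>j. sublist w (subst_iter \<sigma> j a))}"

text \<open>L(sigma,a): closure of lang0 in each K^n with the product topology
  (written out: w is approximated letterwise by words of the same length).\<close>
definition lang_letter :: "'a::metric_space set \<Rightarrow> ('a \<Rightarrow> 'a list) \<Rightarrow> 'a \<Rightarrow> 'a list set" where
  "lang_letter K \<sigma> a = {w. w \<noteq> [] \<and> set w \<subseteq> K \<and>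
     (\<forall>e>0. \<exists>v\<in>lang0 \<sigma> a. length v = length w \<and> (\<forall>i<length w. dist (v ! i) (w ! i) < e))}"

definition lang :: "'a::metric_space set \<Rightarrow> ('a \<Rightarrow> 'a list) \<Rightarrow> 'a list set" where
  "lang K \<sigma> = (\<Union>a\<in>K. lang_letter K \<sigma> a)"

end

theory Submission
  imports Defs
begin

definition close :: "real \<Rightarrow> 'a::metric_space list \<Rightarrow> 'a list \<Rightarrow> bool" where
  "close e u u' \<longleftrightarrow> length u = length u' \<and> (\<forall>i<length u. dist (u!i) (u'!i) < e)"

lemma close_append:
  assumes "close e a b" "close e c d" shows "close e (a@c) (b@d)"
  using assms unfolding close_def by (auto simp: nth_append)

lemma close_mono: "close d u v \<Longrightarrow> d \<le> e \<Longrightarrow> close e u v"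
  unfolding close_def by force

lemma subst_word_append: "subst_word \<sigma> (p@q) = subst_word \<sigma> p @ subst_word \<sigma> q"
  by (simp add: subst_word_def)

lemma funpow_subst_append:
  "(subst_word \<sigma> ^^ j) (p@q) = (subst_word \<sigma> ^^ j) p @ (subst_word \<sigma> ^^ j) q"
  by (induction j) (auto simp: subst_word_append)

lemma subst_word_K:
  assumes "gen_subst K \<sigma>" "set u \<subseteq> K" shows "set (subst_word \<sigma> u) \<subseteq> K"
  using assms unfolding gen_subst_def subst_word_def by auto

lemma funpow_K:
  assumes "gen_subst K \<sigma>" "set u \<subseteq> K" shows "set ((subst_word \<sigma> ^^ k) u) \<subseteq> K"
  using assms by (induction k) (auto dest: subst_word_K[OF assms(1)])

lemma letter_cont:
  assumes g: "gen_subst K \<sigma>" and x: "x \<in> K" and e: "e > 0"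
  shows "\<exists>d>0. \<forall>y\<in>K. dist y x < d \<longrightarrow> close e (\<sigma> x) (\<sigma> y)"
proof -
  have cl: "continuous_on K (\<lambda>a. length (\<sigma> a))" using g unfolding gen_subst_def by auto
  obtain A where A: "open A" "x \<in> A" "\<forall>y\<in>K. y \<in> A \<longrightarrow> length (\<sigma> y) \<in> {length (\<sigma> x)}"
    using cl x unfolding continuous_on_topological by (meson open_discrete insertI1)
  obtain d0 where d0: "d0 > 0" "ball x d0 \<subseteq> A" using A open_contains_ball by blast
  have len: "\<forall>y\<in>K. dist y x < d0 \<longrightarrow> length (\<sigma> y) = length (\<sigma> x)"
    using d0 A(3) by (metis dist_commute mem_ball subsetD singletonD)
  have "\<forall>n\<le>length (\<sigma> x). \<exists>d>0. \<forall>y\<in>K. dist y x < d \<longrightarrow> length (\<sigma> y) = length (\<sigma> x) \<and>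
          (\<forall>j<n. dist (\<sigma> x ! j) (\<sigma> y ! j) < e)"
  proof (intro allI impI)
    fix n assume "n \<le> length (\<sigma> x)"
    then show "\<exists>d>0. \<forall>y\<in>K. dist y x < d \<longrightarrow> length (\<sigma> y) = length (\<sigma> x) \<and>
          (\<forall>j<n. dist (\<sigma> x ! j) (\<sigma> y ! j) < e)"
    proof (induction n)
      case 0 then show ?case using d0 len by blast
    next
      case (Suc n)
      then obtain d1 where d1: "d1 > 0" "\<forall>y\<in>K. dist y x < d1 \<longrightarrow> length (\<sigma> y) = length (\<sigma> x) \<and>
          (\<forall>j<n. dist (\<sigma> x ! j) (\<sigma> y ! j) < e)" by auto
      have cn: "continuous_on {a\<in>K. n < length (\<sigma> a)} (\<lambda>a. \<sigma> a ! n)"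
        using g unfolding gen_subst_def by auto
      have xin: "x \<in> {a\<in>K. n < length (\<sigma> a)}" using x Suc.prems by auto
      obtain d2 where d2: "d2 > 0" "\<forall>y\<in>{a\<in>K. n < length (\<sigma> a)}. dist y x < d2 \<longrightarrow>
          dist (\<sigma> y ! n) (\<sigma> x ! n) < e"
        using cn xin e unfolding continuous_on_iff by blast
      show ?case
      proof (intro exI[of _ "min d1 d2"] conjI ballI impI)
        show "min d1 d2 > 0" using d1 d2 by auto
        fix y assume y: "y \<in> K" "dist y x < min d1 d2"
        then have ly: "length (\<sigma> y) = length (\<sigma> x)" and lt: "\<forall>j<n. dist (\<sigma> x ! j) (\<sigma> y ! j) < e"
          using d1 by auto
        show "length (\<sigma> y) = length (\<sigma> x)" by (rule ly)
        have "dist (\<sigma> y ! n) (\<sigma> x ! n) < e" using d2(2) y ly Suc.prems by auto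
        then show "\<forall>j<Suc n. dist (\<sigma> x ! j) (\<sigma> y ! j) < e"
          using lt by (metis dist_commute less_Suc_eq)
      qed
    qed
  qed
  then obtain d where "d > 0" "\<forall>y\<in>K. dist y x < d \<longrightarrow> length (\<sigma> y) = length (\<sigma> x) \<and>
          (\<forall>j<length (\<sigma> x). dist (\<sigma> x ! j) (\<sigma> y ! j) < e)" by blast
  then show ?thesis unfolding close_def by (auto simp: dist_commute)
qed

lemma word_cont:
  assumes g: "gen_subst K \<sigma>"
  shows "set u \<subseteq> K \<Longrightarrow> e > 0 \<Longrightarrow> \<exists>d>0. \<forall>u'. set u' \<subseteq> K \<and> close d u u' \<longrightarrow>
     close e (subst_word \<sigma> u) (subst_word \<sigma> u')"
proof (induction u)
  case Nil
  then show ?case by (intro exI[of _ 1]) (auto simp: close_def subst_word_def)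
next
  case (Cons x xs)
  then obtain d1 where d1: "d1 > 0" "\<forall>u'. set u' \<subseteq> K \<and> close d1 xs u' \<longrightarrow>
     close e (subst_word \<sigma> xs) (subst_word \<sigma> u')" by auto
  obtain d2 where d2: "d2 > 0" "\<forall>y\<in>K. dist y x < d2 \<longrightarrow> close e (\<sigma> x) (\<sigma> y)"
  proof -
    have "x \<in> K" using Cons.prems(1) by simp
    from letter_cont[OF g this Cons.prems(2)] show ?thesis using that by blast
  qed
  show ?case
  proof (intro exI[of _ "min d1 d2"] conjI allI impI)
    show "min d1 d2 > 0" using d1 d2 by auto
    fix u' assume u': "set u' \<subseteq> K \<and> close (min d1 d2) (x # xs) u'"
    then obtain y ys where uy: "u' = y # ys" unfolding close_def by (cases u') auto
    have L: "length (x#xs) = length (y#ys)" and D: "\<forall>i<length (x#xs). dist ((x#xs)!i) ((y#ys)!i) < min d1 d2"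
      using u' unfolding uy close_def by blast+
    have c1: "close d1 xs ys" unfolding close_def
    proof (intro conjI allI impI)
      show "length xs = length ys" using L by simp
      fix i assume "i < length xs"
      then have "Suc i < length (x#xs)" by simp
      then have "dist ((x#xs)!Suc i) ((y#ys)!Suc i) < min d1 d2" using D by blast
      then show "dist (xs!i) (ys!i) < d1" by simp
    qed
    have "dist x y < min d1 d2" using D[rule_format, of 0] by simp
    then have "dist y x < d2" by (simp add: dist_commute)
    then have c2: "close e (\<sigma> x) (\<sigma> y)" using d2 u' uy by simp
    have ysK: "set ys \<subseteq> K" using u' uy by simp
    have "close e (subst_word \<sigma> xs) (subst_word \<sigma> ys)" using d1(2) c1 ysK by blast
    then have "close e (\<sigma> x @ subst_word \<sigma> xs) (\<sigma> y @ subst_word \<sigma> ys)"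
      using c2 close_append by blast
    then show "close e (subst_word \<sigma> (x # xs)) (subst_word \<sigma> u')"
      unfolding uy subst_word_def by simp
  qed
qed

lemma iter_cont:
  assumes g: "gen_subst K \<sigma>"
  shows "set u \<subseteq> K \<Longrightarrow> e > 0 \<Longrightarrow> \<exists>d>0. \<forall>u'. set u' \<subseteq> K \<and> close d u u' \<longrightarrow>
     close e ((subst_word \<sigma> ^^ k) u) ((subst_word \<sigma> ^^ k) u')"
proof (induction k arbitrary: e)
  case 0
  then show ?case by auto
next
  case (Suc k)
  obtain d1 where d1: "d1 > 0" "\<forall>u'. set u' \<subseteq> K \<and> close d1 ((subst_word \<sigma> ^^ k) u) u' \<longrightarrow>
     close e (subst_word \<sigma> ((subst_word \<sigma> ^^ k) u)) (subst_word \<sigma> u')"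
  proof -
    have "set ((subst_word \<sigma> ^^ k) u) \<subseteq> K" using funpow_K[OF g Suc.prems(1)] by blast
    from word_cont[OF g this Suc.prems(2)] show ?thesis using that by blast
  qed
  obtain d where d: "d > 0" "\<forall>u'. set u' \<subseteq> K \<and> close d u u' \<longrightarrow>
     close d1 ((subst_word \<sigma> ^^ k) u) ((subst_word \<sigma> ^^ k) u')"
    using Suc.IH[OF Suc.prems(1) d1(1)] by auto
  show ?case
  proof (intro exI[of _ d] conjI allI impI)
    show "d > 0" by (rule d(1))
    fix u' assume u': "set u' \<subseteq> K \<and> close d u u'"
    then have "close d1 ((subst_word \<sigma> ^^ k) u) ((subst_word \<sigma> ^^ k) u')" using d(2) by blast
    moreover have "set ((subst_word \<sigma> ^^ k) u') \<subseteq> K" using funpow_K[OF g] u' by blast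
    ultimately show "close e ((subst_word \<sigma> ^^ Suc k) u) ((subst_word \<sigma> ^^ Suc k) u')"
      using d1(2) by simp
  qed
qed

lemma close_slice:
  assumes "close e (p@v@q) t" shows "\<exists>v'. sublist v' t \<and> close e v v'"
proof -
  let ?v = "take (length v) (drop (length p) t)"
  have lt: "length t = length p + length v + length q" using assms unfolding close_def by simp
  have "sublist ?v t"
    by (metis append_take_drop_id sublist_appendI)
  moreover have "close e v ?v"
    unfolding close_def
  proof (intro conjI allI impI)
    show "length v = length ?v" using lt by simp
    fix i assume i: "i < length v"
    have all: "\<forall>i<length (p@v@q). dist ((p@v@q) ! i) (t ! i) < e"
      using assms unfolding close_def by blast
    have "length p + i < length (p@v@q)" using i by simp
    then have "dist ((p@v@q) ! (length p + i)) (t ! (length p + i)) < e"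
      using all by blast
    moreover have "(p@v@q) ! (length p + i) = v ! i" using i by (simp add: nth_append)
    moreover have "t ! (length p + i) = ?v ! i" using i lt by simp
    ultimately show "dist (v ! i) (?v ! i) < e" by metis
  qed
  ultimately show ?thesis by blast
qed

lemma subset_lang:
  assumes g: "gen_subst K \<sigma>" and pr: "primitive K \<sigma>" and a: "a \<in> K" and b: "b \<in> K"
  shows "lang_letter K \<sigma> a \<subseteq> lang_letter K \<sigma> b"
proof
  fix w assume w: "w \<in> lang_letter K \<sigma> a"
  have wK: "w \<noteq> []" "set w \<subseteq> K" using w unfolding lang_letter_def by auto
  show "w \<in> lang_letter K \<sigma> b"
    unfolding lang_letter_def
  proof (intro CollectI conjI allI impI wK)
    fix e :: real assume e: "e > 0"
    then obtain v where v: "v \<in> lang0 \<sigma> a" "length v = length w"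
        "\<forall>i<length w. dist (v ! i) (w ! i) < e/2"
    proof -
      have "\<forall>e>0. \<exists>v\<in>lang0 \<sigma> a. length v = length w \<and> (\<forall>i<length w. dist (v ! i) (w ! i) < e)"
        using w unfolding lang_letter_def by blast
      moreover have "e/2 > 0" using e by simp
      ultimately have "\<exists>v\<in>lang0 \<sigma> a. length v = length w \<and> (\<forall>i<length w. dist (v ! i) (w ! i) < e/2)"
        by blast
      then show ?thesis using that by blast
    qed
    then obtain j where "sublist v (subst_iter \<sigma> j a)" and vne: "v \<noteq> []"
      unfolding lang0_def by auto
    then obtain p q where pq: "subst_iter \<sigma> j a = p @ v @ q"
      unfolding sublist_def by auto
    obtain d where d: "d > 0" "\<forall>u'. set u' \<subseteq> K \<and> close d [a] u' \<longrightarrow>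
       close (e/2) ((subst_word \<sigma> ^^ j) [a]) ((subst_word \<sigma> ^^ j) u')"
      using iter_cont[OF g, of "[a]" "e/2" j] a e by auto
    have "openin (top_of_set K) (K \<inter> ball a d)"
      by (simp add: openin_open_Int)
    moreover have "K \<inter> ball a d \<noteq> {}" using a d by auto
    ultimately obtain k where "\<forall>c\<in>K. \<forall>k'\<ge>k. \<exists>x\<in>set (subst_iter \<sigma> k' c). x \<in> K \<inter> ball a d"
      using pr unfolding primitive_def by blast
    then obtain x where x: "x \<in> set (subst_iter \<sigma> k b)" "x \<in> K" "dist a x < d"
      using b by auto
    then obtain r s where rs: "subst_iter \<sigma> k b = r @ [x] @ s"
      by (metis append_Cons append_Nil split_list)
    have "close d [a] [x]" using x unfolding close_def by auto
    then have cl: "close (e/2) (p @ v @ q) ((subst_word \<sigma> ^^ j) [x])"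
      using d x pq unfolding subst_iter_def by auto
    obtain v' where v': "sublist v' ((subst_word \<sigma> ^^ j) [x])" "close (e/2) v v'"
      using close_slice[OF cl] by auto
    have "subst_iter \<sigma> (j + k) b = (subst_word \<sigma> ^^ j) (subst_iter \<sigma> k b)"
      unfolding subst_iter_def by (simp add: funpow_add)
    also have "\<dots> = (subst_word \<sigma> ^^ j) r @ (subst_word \<sigma> ^^ j) [x] @ (subst_word \<sigma> ^^ j) s"
      unfolding rs by (simp only: funpow_subst_append)
    finally have eqn: "subst_iter \<sigma> (j + k) b = (subst_word \<sigma> ^^ j) r @ (subst_word \<sigma> ^^ j) [x] @ (subst_word \<sigma> ^^ j) s" .
    have "sublist ((subst_word \<sigma> ^^ j) [x]) (subst_iter \<sigma> (j + k) b)"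
      unfolding eqn by (rule sublist_appendI)
    then have sb: "sublist v' (subst_iter \<sigma> (j + k) b)"
      using v'(1) sublist_order.order_trans by blast
    have "v' \<noteq> []" using v'(2) vne unfolding close_def by auto
    then have "v' \<in> lang0 \<sigma> b" unfolding lang0_def using sb by blast
    moreover have "length v' = length w" using v'(2) v(2) unfolding close_def by simp
    moreover have "\<forall>i<length w. dist (v' ! i) (w ! i) < e"
    proof (intro allI impI)
      fix i assume i: "i < length w"
      have "dist (v' ! i) (w ! i) \<le> dist (v' ! i) (v ! i) + dist (v ! i) (w ! i)"
        by (rule dist_triangle)
      moreover have "dist (v' ! i) (v ! i) < e/2"
      proof -
        have cv: "\<forall>i<length v. dist (v!i) (v'!i) < e/2" using v'(2) unfolding close_def by blast
        have "i < length v" using i v(2) by simp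
        then have "dist (v!i) (v'!i) < e/2" using cv by blast
        then show ?thesis by (simp add: dist_commute)
      qed
      moreover have "dist (v ! i) (w ! i) < e/2" using v(3) i by blast
      ultimately show "dist (v' ! i) (w ! i) < e" by linarith
    qed
    ultimately show "\<exists>v\<in>lang0 \<sigma> b. length v = length w \<and> (\<forall>i<length w. dist (v ! i) (w ! i) < e)"
      by blast
  qed
qed

theorem mainTheorem18:
  fixes K :: "'a::metric_space set" and \<sigma> :: "'a \<Rightarrow> 'a list"
  assumes "alphabet_space K" and "gen_subst K \<sigma>" and "primitive K \<sigma>"
    and "a \<in> K" and "b \<in> K"
  shows "lang_letter K \<sigma> a = lang_letter K \<sigma> b \<and> lang_letter K \<sigma> b = lang K \<sigma>"
proof -
  have eq: "\<And>c c'. c \<in> K \<Longrightarrow> c' \<in> K \<Longrightarrow> lang_letter K \<sigma> c = lang_letter K \<sigma> c'"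
    using subset_lang[OF assms(2,3)] by (meson subset_antisym)
  have "(\<Union>c\<in>K. lang_letter K \<sigma> c) = (\<Union>c\<in>K. lang_letter K \<sigma> b)"
    by (rule SUP_cong[OF refl], rule eq, assumption, rule assms(5))
  also have "\<dots> = lang_letter K \<sigma> b" using assms(5) by blast
  finally have "lang K \<sigma> = lang_letter K \<sigma> b" unfolding lang_def .
  moreover have "lang_letter K \<sigma> a = lang_letter K \<sigma> b" by (rule eq[OF assms(4,5)])
  ultimately show ?thesis by simp
qed

end
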